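(* Let $I_n$ denote the number of inversion sequences of length $n$ avoiding all of the patterns $110,120,201,210$ (with $I_0=1$). Consider the polynomial in $x$ $$K(x)=z^2x^4-z^2x^3-2zx^3+3zx^2+x^2-2zx-2x+1.$$ It has exactly two roots $X_1,X_2$ that are formal Puiseux series in $z$ (in powers of $z^{1/2}$) tending to $1$ as $z\to0$, namely $X_1=1-z^{1/2}+z-2z^{3/2}+\tfrac72z^2-\cdots$ and $X_2=1+z^{1/2}+z+2z^{3/2}+\tfrac72z^2+\cdots$ (the other two roots diverge as $z\to0$). Then $$\sum_{n\ge0}I_nz^n=\frac{(X_1-1)(X_2-1)(zX_1X_2-1)}{X_1X_2z\,(X_1X_2z-X_1z-X_2z+z+1)}=1+z+2z^2+6z^3+22z^4+90z^5+396z^6+1833z^7+\cdots.$$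
   Context: An inversion sequence of length $n$ is an integer sequence $(a_1,\dots,a_n)$ with $0\le a_i<i$ for all $i$. A pattern is a sequence $\sigma$ of non-negative integers containing every value from $0$ to $\max(\sigma)$; the reduction of a sequence replaces its smallest values by $0$, the next smallest by $1$, etc. A sequence $a$ contains $\sigma$ if some (not necessarily consecutive) subsequence of $a$ has reduction $\sigma$; otherwise $a$ avoids $\sigma$. Equivalently, these are the inversion sequences with no $i<j<k$ such that $a_j\ne a_k$ and $a_i>a_k$. *)

theory Defs
  imports Main "HOL-Computational_Algebra.Formal_Laurent_Series"
begin

definition reduction :: "nat list \<Rightarrow> nat list" where
  "reduction s = map (\<lambda>v. card {w \<in> set s. w < v}) s"

definition contains_pattern :: "nat list \<Rightarrow> nat list \<Rightarrow> bool" where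
  "contains_pattern a \<sigma> \<longleftrightarrow> (\<exists>s \<in> set (subseqs a). reduction s = \<sigma>)"

definition avoids :: "nat list \<Rightarrow> nat list \<Rightarrow> bool" where
  "avoids a \<sigma> \<longleftrightarrow> \<not> contains_pattern a \<sigma>"

text \<open>Inversion sequences of length n, stored 0-indexed: entry a!i (i.e. a_{i+1}) satisfies a!i \<le> i.\<close>
definition inversion_seqs :: "nat \<Rightarrow> nat list set" where
  "inversion_seqs n = {a. length a = n \<and> (\<forall>i<n. a ! i \<le> i)}"

definition I_count :: "nat \<Rightarrow> nat" where
  "I_count n = card {a \<in> inversion_seqs n.
     avoids a [1,1,0] \<and> avoids a [1,2,0] \<and> avoids a [2,0,1] \<and> avoids a [2,1,0]}"

text \<open>The kernel polynomial K(x) with z replaced by t^2, as a function on power series in t.\<close>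
definition Kt :: "real fps \<Rightarrow> real fps" where
  "Kt X = (let Z = fps_X ^ 2 in
     Z^2 * X^4 - Z^2 * X^3 - 2 * Z * X^3 + 3 * Z * X^2 + X^2 - 2 * Z * X - 2 * X + 1)"

end

theory Submission
  imports Defs "HOL-Library.Sublist"
begin


lemma subseq_snoc_iff:
  "subseq xs (ys @ [v]) \<longleftrightarrow> subseq xs ys \<or> (\<exists>zs. xs = zs @ [v] \<and> subseq zs ys)"
proof
  assume "subseq xs (ys @ [v])"
  then obtain xs1 xs2 where "xs = xs1 @ xs2" "subseq xs1 ys" "subseq xs2 [v]"
    by (auto simp: subseq_append_iff)
  moreover have "xs2 = [] \<or> xs2 = [v]" using \<open>subseq xs2 [v]\<close>
    by (cases xs2) (auto split: if_splits)
  ultimately show "subseq xs ys \<or> (\<exists>zs. xs = zs @ [v] \<and> subseq zs ys)" by auto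
next
  assume "subseq xs ys \<or> (\<exists>zs. xs = zs @ [v] \<and> subseq zs ys)"
  then show "subseq xs (ys @ [v])"
    by (auto intro: list_emb_append_mono)
qed

lemma sub3_snoc: "subseq [x,y,w] (a @ [v]) \<longleftrightarrow> subseq [x,y,w] a \<or> (w = v \<and> subseq [x,y] a)"
  by (auto simp: subseq_snoc_iff)
lemma sub2_snoc: "subseq [x,y] (a @ [v]) \<longleftrightarrow> subseq [x,y] a \<or> (y = v \<and> x \<in> set a)"
  by (auto simp: subseq_snoc_iff subseq_singleton_left)
lemma sub2_set: "subseq [x,y] a \<Longrightarrow> x \<in> set a"
  by (metis list.set_intros(1) subseq_order.dual_order.trans subseq_singleton_left subseq_Cons2 subseq_Cons')


definition mx :: "nat list \<Rightarrow> nat" where "mx xs = Max (insert 0 (set xs))"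
definition lst :: "nat list \<Rightarrow> nat" where "lst xs = (if xs = [] then 0 else last xs)"
definition mb :: "nat list \<Rightarrow> nat" where "mb xs = mx (butlast xs)"
definition bad :: "nat list \<Rightarrow> bool" where
  "bad a \<longleftrightarrow> (\<exists>x y w. subseq [x,y,w] a \<and> w < x \<and> y \<noteq> w)"

lemma mx_Nil[simp]: "mx [] = 0" by (simp add: mx_def)
lemma mx_snoc[simp]: "mx (xs @ [v]) = max (mx xs) v"
proof -
  have "insert 0 (set (xs @ [v])) = insert v (insert 0 (set xs))" by auto
  then show ?thesis unfolding mx_def by (simp add: max.commute)
qed
lemma mx_ge: "x \<in> set xs \<Longrightarrow> x \<le> mx xs" by (simp add: mx_def)
lemma mx_gt: "v < mx xs \<Longrightarrow> \<exists>x\<in>set xs. v < x"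
proof -
  assume "v < mx xs"
  have "mx xs \<in> insert 0 (set xs)" unfolding mx_def by (rule Max_in) auto
  with \<open>v < mx xs\<close> show ?thesis by auto
qed
lemma lst_snoc[simp]: "lst (xs @ [v]) = v" by (simp add: lst_def)
lemma mb_snoc[simp]: "mb (xs @ [v]) = mx xs" by (simp add: mb_def)
lemma lst_Nil[simp]: "lst [] = 0" by (simp add: lst_def)
lemma mb_Nil[simp]: "mb [] = 0" by (simp add: mb_def)

lemma mx_mb_lst: "mx a = max (mb a) (lst a)"
  by (cases a rule: rev_cases) auto

lemma bad_snoc: "bad (a @ [v]) \<longleftrightarrow> bad a \<or> (\<exists>x y. subseq [x,y] a \<and> v < x \<and> y \<noteq> v)"
  unfolding bad_def sub3_snoc by blast

lemma good_snoc_cond: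
  assumes "\<not> bad a"
  shows "(\<exists>x y. subseq [x,y] a \<and> v < x \<and> y \<noteq> v) \<longleftrightarrow> \<not> (v = lst a \<or> mb a \<le> v)"
proof (cases a rule: rev_cases)
  case Nil
  then show ?thesis by simp
next
  case (snoc a' L)
  show ?thesis
  proof
    assume "\<exists>x y. subseq [x,y] a \<and> v < x \<and> y \<noteq> v"
    then obtain x y where xy: "subseq [x,y] a" "v < x" "y \<noteq> v" by blast
    show "\<not> (v = lst a \<or> mb a \<le> v)"
    proof
      assume h: "v = lst a \<or> mb a \<le> v"
      from xy(1) have c: "subseq [x,y] a' \<or> (y = L \<and> x \<in> set a')" by (simp add: snoc sub2_snoc)
      have "x \<in> set a'" using c by (auto dest: sub2_set)
      then have "x \<le> mb a" by (simp add: snoc mx_ge)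
      then have "\<not> mb a \<le> v" using xy(2) by linarith
      then have "v = L" using h snoc by simp
      then have "subseq [x,y] a'" using c xy by auto
      then have "subseq [x,y,L] a" by (simp add: snoc sub3_snoc)
      then have "bad a" unfolding bad_def using xy \<open>v = L\<close> by blast
      then show False using assms by simp
    qed
  next
    assume "\<not> (v = lst a \<or> mb a \<le> v)"
    then have h: "v \<noteq> L" "v < mx a'" using snoc by auto
    then obtain x where "x \<in> set a'" "v < x" using mx_gt by blast
    then have "subseq [x,L] a" by (simp add: snoc sub2_snoc)
    moreover have "L \<noteq> v" using h(1) by simp
    ultimately show "\<exists>x y. subseq [x,y] a \<and> v < x \<and> y \<noteq> v" using \<open>v < x\<close> by blast
  qed
qed

lemma good_snoc: "\<not> bad (a @ [v]) \<longleftrightarrow> \<not> bad a \<and> (v = lst a \<or> mb a \<le> v)"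
  by (cases "bad a") (simp_all add: bad_snoc good_snoc_cond)


lemma filt3: "{u \<in> set [x,y,w]. u < (v::nat)} = (if x<v then {x} else {}) \<union> (if y < v then {y} else {}) \<union> (if w < v then {w} else {})"
  by auto
lemma red3: "reduction [x,y,w] = [card {u \<in> set [x,y,w]. u < x}, card {u \<in> set [x,y,w]. u < y}, card {u \<in> set [x,y,w]. u < w}]"
  by (simp add: reduction_def)
lemma red_bad: "reduction [x,y,w] \<in> {[1,1,0],[1,2,0],[2,0,1],[2,1,0]} \<longleftrightarrow> (w < (x::nat) \<and> y \<noteq> w)"
proof
  assume "w < x \<and> y \<noteq> w"
  then show "reduction [x,y,w] \<in> {[1,1,0],[1,2,0],[2,0,1],[2,1,0]}"
    unfolding red3 filt3 by (cases "x = y"; cases "x < y"; cases "y < w") auto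
next
  assume h: "reduction [x,y,w] \<in> {[1,1,0],[1,2,0],[2,0,1],[2,1,0]}"
  have "\<forall>l \<in> {[1,1,0],[1,2,0],[2,0,1],[2,1,0]::nat list}. l!2 < l!0 \<and> l!1 \<noteq> l!2" by simp
  with h have h2: "reduction [x,y,w] ! 2 < reduction [x,y,w] ! 0" "reduction [x,y,w] ! 1 \<noteq> reduction [x,y,w] ! 2"
    by blast+
  then have h3: "card {u \<in> set [x,y,w]. u < w} < card {u \<in> set [x,y,w]. u < x}"
     "card {u \<in> set [x,y,w]. u < y} \<noteq> card {u \<in> set [x,y,w]. u < w}"
    by (simp_all only: red3 nth_Cons_0 nth_Cons_Suc numeral_2_eq_2 One_nat_def not_False_eq_True)
  show "w < x \<and> y \<noteq> w"
  proof (rule ccontr)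
    assume "\<not> (w < x \<and> y \<noteq> w)"
    then consider "x \<le> w" | "y = w" by linarith
    then show False
    proof cases
      case 1
      then have "{u \<in> set [x,y,w]. u < x} \<subseteq> {u \<in> set [x,y,w]. u < w}" by auto
      then have "card {u \<in> set [x,y,w]. u < x} \<le> card {u \<in> set [x,y,w]. u < w}"
        by (intro card_mono) auto
      then show False using h3 by linarith
    next
      case 2
      then show False using h3 by simp
    qed
  qed
qed
lemma length_reduction[simp]: "length (reduction s) = length s" by (simp add: reduction_def)

lemma len3: "length s = 3 \<Longrightarrow> \<exists>x y w. s = [x,y,w]"
  by (cases s; cases "tl s"; cases "tl (tl s)") (auto simp: numeral_3_eq_3)

lemma avoid_iff: "(avoids a [1,1,0] \<and> avoids a [1,2,0] \<and> avoids a [2,0,1] \<and> avoids a [2,1,0]) \<longleftrightarrow> \<not> bad a"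
proof
  assume "\<not> bad a"
  show "avoids a [1,1,0] \<and> avoids a [1,2,0] \<and> avoids a [2,0,1] \<and> avoids a [2,1,0]"
  proof (rule ccontr)
    assume "\<not> ?thesis"
    then obtain s \<sigma> where s: "subseq s a" "reduction s = \<sigma>" "\<sigma> \<in> {[1,1,0],[1,2,0],[2,0,1],[2,1,0]}"
      unfolding avoids_def contains_pattern_def by auto
    then have "length s = 3" using length_reduction[of s] by auto
    then obtain x y w where sx: "s = [x,y,w]" using len3 by blast
    then have "w < x \<and> y \<noteq> w" using red_bad s by auto
    then show False using \<open>\<not> bad a\<close> s(1) sx unfolding bad_def by blast
  qed
next
  assume "avoids a [1,1,0] \<and> avoids a [1,2,0] \<and> avoids a [2,0,1] \<and> avoids a [2,1,0]"
  then have av: "\<not> (\<exists>s. subseq s a \<and> reduction s \<in> {[1,1,0],[1,2,0],[2,0,1],[2,1,0]})"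
    unfolding avoids_def contains_pattern_def by auto
  show "\<not> bad a"
  proof
    assume "bad a"
    then obtain x y w where "subseq [x,y,w] a" "w < x" "y \<noteq> w" unfolding bad_def by blast
    then show False using av red_bad by blast
  qed
qed
definition VV :: "nat \<Rightarrow> nat list set" where "VV n = {a \<in> inversion_seqs n. \<not> bad a}"
definition ext :: "nat list \<Rightarrow> nat \<Rightarrow> nat set" where "ext a n = {v. v \<le> n \<and> (v = lst a \<or> mb a \<le> v)}"

lemma I_count_VV: "I_count n = card (VV n)"
  unfolding I_count_def VV_def using avoid_iff by presburger

lemma inv_len: "a \<in> inversion_seqs n \<Longrightarrow> length a = n" by (simp add: inversion_seqs_def)

lemma inv_snoc: "a @ [v] \<in> inversion_seqs (Suc n) \<longleftrightarrow> a \<in> inversion_seqs n \<and> v \<le> n"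
proof
  assume h: "a @ [v] \<in> inversion_seqs (Suc n)"
  then have l: "length a = n" by (simp add: inversion_seqs_def)
  have all: "\<forall>i<Suc n. (a@[v]) ! i \<le> i" using h by (simp add: inversion_seqs_def)
  have "\<forall>i<n. a ! i \<le> i"
  proof (intro allI impI)
    fix i assume "i < n"
    then have "(a@[v]) ! i \<le> i" using all by simp
    then show "a ! i \<le> i" using l \<open>i < n\<close> by (simp add: nth_append)
  qed
  moreover have "v \<le> n" using all[rule_format, of n] l by (simp add: nth_append)
  ultimately have "\<forall>i<n. a ! i \<le> i" "v \<le> n" by auto
  then show "a \<in> inversion_seqs n \<and> v \<le> n" using l by (simp add: inversion_seqs_def)
next
  assume h: "a \<in> inversion_seqs n \<and> v \<le> n"
  then have l: "length a = n" by (simp add: inversion_seqs_def)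
  have "\<forall>i<Suc n. (a@[v]) ! i \<le> i"
  proof (intro allI impI)
    fix i assume "i < Suc n"
    then consider "i < n" | "i = n" by linarith
    then show "(a@[v]) ! i \<le> i"
      by cases (use h l in \<open>auto simp: nth_append inversion_seqs_def\<close>)
  qed
  then show "a @ [v] \<in> inversion_seqs (Suc n)" using l by (simp add: inversion_seqs_def)
qed

lemma finite_inv: "finite (inversion_seqs n)"
proof -
  have "inversion_seqs n \<subseteq> {xs. set xs \<subseteq> {0..n} \<and> length xs = n}"
  proof
    fix a assume "a \<in> inversion_seqs n"
    then have "length a = n" "\<forall>i<n. a ! i \<le> i" by (auto simp: inversion_seqs_def)
    have "set a \<subseteq> {0..n}"
    proof
      fix x assume "x \<in> set a"
      then obtain i where "i < length a" "x = a ! i" by (auto simp: in_set_conv_nth)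
      then show "x \<in> {0..n}" using \<open>length a = n\<close> \<open>\<forall>i<n. a ! i \<le> i\<close> by auto
    qed
    then show "a \<in> {xs. set xs \<subseteq> {0..n} \<and> length xs = n}" using \<open>length a = n\<close> by simp
  qed
  then show ?thesis by (rule finite_subset) (simp add: finite_lists_length_eq)
qed

lemma finite_VV: "finite (VV n)" unfolding VV_def using finite_inv by simp
lemma finite_ext: "finite (ext a n)" unfolding ext_def by simp

lemma mx_inv: "a \<in> inversion_seqs n \<Longrightarrow> mx a \<le> n"
proof -
  assume "a \<in> inversion_seqs n"
  then have "length a = n" "\<forall>i<n. a ! i \<le> i" by (auto simp: inversion_seqs_def)
  have "\<forall>x\<in>insert 0 (set a). x \<le> n"
  proof
    fix x assume "x \<in> insert 0 (set a)"
    then consider "x = 0" | "x \<in> set a" by auto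
    then show "x \<le> n"
    proof cases
      case 2
      then obtain i where "i < length a" "x = a ! i" by (auto simp: in_set_conv_nth)
      then show ?thesis using \<open>length a = n\<close> \<open>\<forall>i<n. a ! i \<le> i\<close> by auto
    qed simp
  qed
  then show "mx a \<le> n" unfolding mx_def by simp
qed

lemma bad_snoc': "bad (a @ [v]) \<longleftrightarrow> bad a \<or> \<not> (v = lst a \<or> mb a \<le> v)"
  using good_snoc by blast

lemma VV_Suc: "VV (Suc n) = (\<lambda>(a,v). a @ [v]) ` (SIGMA a:VV n. ext a n)"
proof
  show "VV (Suc n) \<subseteq> (\<lambda>(a,v). a @ [v]) ` (SIGMA a:VV n. ext a n)"
  proof
    fix b assume b: "b \<in> VV (Suc n)"
    then have "length b = Suc n" by (simp add: VV_def inversion_seqs_def)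
    then obtain a v where bv: "b = a @ [v]" by (cases b rule: rev_cases) auto
    then have "a \<in> VV n" "v \<in> ext a n" using b by (auto simp: VV_def ext_def inv_snoc good_snoc)
    then show "b \<in> (\<lambda>(a,v). a @ [v]) ` (SIGMA a:VV n. ext a n)" using bv by force
  qed
next
  show "(\<lambda>(a,v). a @ [v]) ` (SIGMA a:VV n. ext a n) \<subseteq> VV (Suc n)"
    by (auto simp: VV_def ext_def inv_snoc bad_snoc')
qed

lemma sum_VV_Suc: "(\<Sum>b\<in>VV (Suc n). f b) = (\<Sum>a\<in>VV n. \<Sum>v\<in>ext a n. f (a @ [v]))"
proof -
  have inj: "inj_on (\<lambda>(a,v). a @ [v]) (SIGMA a:VV n. ext a n)"
    by (auto simp: inj_on_def)
  have "(\<Sum>b\<in>VV (Suc n). f b) = (\<Sum>p\<in>(SIGMA a:VV n. ext a n). f ((\<lambda>(a,v). a @ [v]) p))"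
    unfolding VV_Suc by (rule sum.reindex[OF inj, unfolded comp_def])
  also have "\<dots> = (\<Sum>a\<in>VV n. \<Sum>v\<in>ext a n. f (a @ [v]))"
    using sum.Sigma[of "VV n" "\<lambda>a. ext a n" "\<lambda>a v. f (a@[v])", symmetric] finite_VV finite_ext
    by (simp add: split_def)
  finally show ?thesis .
qed
definition sl :: "nat list \<Rightarrow> nat" where "sl a = length a - mx a"
definition cc :: "nat list \<Rightarrow> nat" where "cc a = (if lst a < mb a then 1 else lst a - mb a)"

lemma GS: "((U::'a::comm_ring_1) - 1) * (\<Sum>j\<le>s. U^(j+1)) = U^(s+2) - U"
  by (induction s) (simp_all add: algebra_simps)

lemma HS_step: "(\<Sum>j\<le>Suc s. of_nat (Suc s - j) * (U::'a::comm_ring_1)^(j+1)) =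
   (\<Sum>j\<le>s. of_nat (s - j) * U^(j+1)) + (\<Sum>j\<le>s. U^(j+1))"
proof -
  have "(\<Sum>j\<le>Suc s. of_nat (Suc s - j) * U^(j+1)) = (\<Sum>j\<le>s. of_nat (Suc s - j) * U^(j+1))"
    by simp
  also have "\<dots> = (\<Sum>j\<le>s. of_nat (s - j) * U^(j+1) + U^(j+1))"
    by (rule sum.cong) (auto simp: Suc_diff_le algebra_simps)
  finally show ?thesis by (simp add: sum.distrib)
qed

lemma HS: "((U::'a::comm_ring_1) - 1)^2 * (\<Sum>j\<le>s. of_nat (s - j) * U^(j+1)) = U^(s+2) - U^2 - of_nat s * U * (U - 1)"
proof (induction s)
  case 0
  then show ?case by (simp add: power2_eq_square)
next
  case (Suc s)
  have "(U - 1)^2 * (\<Sum>j\<le>Suc s. of_nat (Suc s - j) * U^(j+1)) =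
     (U - 1)^2 * (\<Sum>j\<le>s. of_nat (s - j) * U^(j+1)) + (U - 1) * ((U - 1) * (\<Sum>j\<le>s. U^(j+1)))"
    unfolding HS_step by (simp add: algebra_simps power2_eq_square)
  also have "\<dots> = U^(s+2) - U^2 - of_nat s * U * (U - 1) + (U - 1) * (U^(s+2) - U)"
    by (simp only: Suc.IH GS)
  also have "\<dots> = U^(Suc s+2) - U^2 - of_nat (Suc s) * U * (U - 1)"
    by (simp add: algebra_simps)
  finally show ?case .
qed

lemma sum_high_rev: "(M::nat) \<le> n \<Longrightarrow> (\<Sum>v\<in>{M..n}. g v) = (\<Sum>j\<le>n - M. g (n - j))"
  apply (rule sum.reindex_bij_witness[where i="\<lambda>j. n - j" and j="\<lambda>v. n - v"])
  apply (auto simp: diff_diff_cancel)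
  done

lemma ext_split:
  assumes "mx a \<le> n"
  shows "ext a n = {mx a..n} \<union> {v. v < mx a \<and> (v = lst a \<or> mb a \<le> v)}"
  using assms mx_mb_lst[of a] unfolding ext_def by auto

lemma low_card: "card {v. v < mx a \<and> (v = lst a \<or> mb a \<le> v)} = cc a"
proof (cases "lst a < mb a")
  case True
  then have "{v. v < mx a \<and> (v = lst a \<or> mb a \<le> v)} = {lst a}" using mx_mb_lst[of a] by auto
  then show ?thesis using True by (simp add: cc_def)
next
  case False
  then have "{v. v < mx a \<and> (v = lst a \<or> mb a \<le> v)} = {mb a..<lst a}" using mx_mb_lst[of a] by auto
  then show ?thesis using False by (simp add: cc_def)
qed

lemma per_a_split:
  assumes "length a = n" "mx a \<le> n"
  shows "(\<Sum>v\<in>ext a n. f (a @ [v])) = (\<Sum>v\<in>{mx a..n}. f (a @ [v])) + (\<Sum>v\<in>{v. v < mx a \<and> (v = lst a \<or> mb a \<le> v)}. f (a @ [v]))"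
proof -
  have fin: "finite {v. v < mx a \<and> (v = lst a \<or> mb a \<le> v)}" by simp
  show ?thesis unfolding ext_split[OF assms(2)]
    by (rule sum.union_disjoint) (auto simp: fin)
qed

lemma high_pt:
  assumes "length a = n" "mx a \<le> n" "j \<le> sl a"
  shows "cc (a @ [n - j]) = sl a - j" "sl (a @ [n - j]) = j + 1"
  using assms by (auto simp: sl_def cc_def)

lemma per_a_1:
  assumes "length a = n" "mx a \<le> n"
  shows "((U::'a::comm_ring_1) - 1) * (\<Sum>v\<in>ext a n. U^(sl (a @ [v]))) = U^(sl a + 2) - U + (U - 1) * of_nat (cc a) * U^(sl a + 1)"
proof -
  let ?L = "{v. v < mx a \<and> (v = lst a \<or> mb a \<le> v)}"
  have low: "(\<Sum>v\<in>?L. U^(sl (a @ [v]))) = of_nat (cc a) * U^(sl a + 1)"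
  proof -
    have "(\<Sum>v\<in>?L. U^(sl (a @ [v]))) = (\<Sum>v\<in>?L. U^(sl a + 1))"
      by (rule sum.cong) (use assms in \<open>auto simp: sl_def Suc_diff_le\<close>)
    then show ?thesis using low_card by simp
  qed
  have high: "(\<Sum>v\<in>{mx a..n}. U^(sl (a @ [v]))) = (\<Sum>j\<le>sl a. U^(j+1))"
  proof -
    have "(\<Sum>v\<in>{mx a..n}. U^(sl (a @ [v]))) = (\<Sum>j\<le>n - mx a. U^(sl (a @ [n - j])))"
      by (rule sum_high_rev[OF assms(2)])
    also have "\<dots> = (\<Sum>j\<le>sl a. U^(j+1))"
      by (rule sum.cong) (use assms in \<open>auto simp: sl_def Suc_diff_le\<close>)
    finally show ?thesis .
  qed
  show ?thesis unfolding per_a_split[OF assms, of "\<lambda>b. U^(sl b)"] low high distrib_left GS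
    by (simp add: algebra_simps)
qed

lemma per_a_2:
  assumes "length a = n" "mx a \<le> n"
  shows "((U::'a::comm_ring_1) - 1)^2 * (\<Sum>v\<in>ext a n. of_nat (cc (a @ [v])) * U^(sl (a @ [v]))) =
     U^(sl a + 2) - U^2 - of_nat (sl a) * U * (U - 1) + (U - 1)^2 * of_nat (cc a) * U^(sl a + 1)"
proof -
  let ?L = "{v. v < mx a \<and> (v = lst a \<or> mb a \<le> v)}"
  have low: "(\<Sum>v\<in>?L. of_nat (cc (a @ [v])) * U^(sl (a @ [v]))) = of_nat (cc a) * U^(sl a + 1)"
  proof -
    have "(\<Sum>v\<in>?L. of_nat (cc (a @ [v])) * U^(sl (a @ [v]))) = (\<Sum>v\<in>?L. U^(sl a + 1))"
      by (rule sum.cong) (use assms in \<open>auto simp: sl_def cc_def Suc_diff_le\<close>)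
    then show ?thesis using low_card by simp
  qed
  have high: "(\<Sum>v\<in>{mx a..n}. of_nat (cc (a @ [v])) * U^(sl (a @ [v]))) = (\<Sum>j\<le>sl a. of_nat (sl a - j) * U^(j+1))"
  proof -
    have "(\<Sum>v\<in>{mx a..n}. of_nat (cc (a @ [v])) * U^(sl (a @ [v]))) =
        (\<Sum>j\<le>n - mx a. of_nat (cc (a @ [n - j])) * U^(sl (a @ [n - j])))"
      by (rule sum_high_rev[OF assms(2)])
    also have "\<dots> = (\<Sum>j\<le>sl a. of_nat (sl a - j) * U^(j+1))"
    proof (rule sum.cong)
      show "{..n - mx a} = {..sl a}" using assms by (simp add: sl_def)
    next
      fix j assume "j \<in> {..sl a}"
      then show "of_nat (cc (a @ [n - j])) * U^(sl (a @ [n - j])) = of_nat (sl a - j) * U^(j+1)"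
        using high_pt[OF assms, of j] by simp
    qed
    finally show ?thesis .
  qed
  show ?thesis unfolding per_a_split[OF assms, of "\<lambda>b. of_nat (cc b) * U^(sl b)"] low high distrib_left HS
    by (simp add: algebra_simps)
qed
definition ww :: "'a::comm_ring_1 \<Rightarrow> nat \<Rightarrow> 'a" where "ww U n = (\<Sum>a\<in>VV n. U^(sl a))"
definition cr :: "'a::comm_ring_1 \<Rightarrow> nat \<Rightarrow> 'a" where "cr U n = (\<Sum>a\<in>VV n. of_nat (cc a) * U^(sl a))"
definition dd :: "nat \<Rightarrow> nat" where "dd n = (\<Sum>a\<in>VV n. sl a)"

lemma VV_props: "a \<in> VV n \<Longrightarrow> length a = n \<and> mx a \<le> n"
  unfolding VV_def using inv_len mx_inv by auto

lemma R1n: "((U::'a::comm_ring_1) - 1) * ww U (Suc n) = U^2 * ww U n - U * of_nat (card (VV n)) + U * (U - 1) * cr U n"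
proof -
  have "(U - 1) * ww U (Suc n) = (\<Sum>a\<in>VV n. (U - 1) * (\<Sum>v\<in>ext a n. U^(sl (a @ [v]))))"
    unfolding ww_def sum_VV_Suc by (simp add: sum_distrib_left)
  also have "\<dots> = (\<Sum>a\<in>VV n. U^(sl a + 2) - U + (U - 1) * of_nat (cc a) * U^(sl a + 1))"
    by (rule sum.cong[OF refl]) (use VV_props per_a_1 in blast)
  also have "\<dots> = U^2 * ww U n - U * of_nat (card (VV n)) + U * (U - 1) * cr U n"
    unfolding ww_def cr_def by (simp add: sum.distrib sum_subtractf sum_distrib_left algebra_simps power2_eq_square)
  finally show ?thesis .
qed

lemma R2n: "((U::'a::comm_ring_1) - 1)^2 * cr U (Suc n) = U^2 * ww U n - U^2 * of_nat (card (VV n)) - U * (U - 1) * of_nat (dd n) + U * (U - 1)^2 * cr U n"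
proof -
  have "(U - 1)^2 * cr U (Suc n) = (\<Sum>a\<in>VV n. (U - 1)^2 * (\<Sum>v\<in>ext a n. of_nat (cc (a @ [v])) * U^(sl (a @ [v]))))"
    unfolding cr_def sum_VV_Suc by (simp add: sum_distrib_left)
  also have "\<dots> = (\<Sum>a\<in>VV n. U^(sl a + 2) - U^2 - of_nat (sl a) * U * (U - 1) + (U - 1)^2 * of_nat (cc a) * U^(sl a + 1))"
    by (rule sum.cong[OF refl]) (use VV_props per_a_2 in blast)
  also have "\<dots> = U^2 * ww U n - U^2 * of_nat (card (VV n)) - U * (U - 1) * of_nat (dd n) + U * (U - 1)^2 * cr U n"
    unfolding ww_def cr_def dd_def of_nat_sum by (simp add: sum.distrib sum_subtractf sum_distrib_left sum_distrib_right algebra_simps power2_eq_square)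
  finally show ?thesis .
qed

lemma ww0: "ww U 0 = 1" and cr0: "cr U 0 = 0"
proof -
  have "VV 0 = {[]}" by (auto simp: VV_def inversion_seqs_def bad_def)
  then show "ww U 0 = 1" "cr U 0 = 0" by (simp_all add: ww_def cr_def sl_def cc_def)
qed



definition eqb :: "nat \<Rightarrow> 'a::comm_ring_1 fps \<Rightarrow> 'a fps \<Rightarrow> bool" where
  "eqb n A B \<longleftrightarrow> (\<forall>i<n. A $ i = B $ i)"

definition contr :: "('a::comm_ring_1 fps \<Rightarrow> 'a fps) \<Rightarrow> bool" where
  "contr \<Phi> \<longleftrightarrow> (\<forall>n A B. eqb n A B \<longrightarrow> eqb (Suc n) (\<Phi> A) (\<Phi> B))"

lemma eqb_refl: "eqb n A A" by (simp add: eqb_def)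
lemma eqb_mono: "eqb n A B \<Longrightarrow> m \<le> n \<Longrightarrow> eqb m A B" by (simp add: eqb_def)
lemma eqb_trans: "eqb n A B \<Longrightarrow> eqb n B C \<Longrightarrow> eqb n A C" by (simp add: eqb_def)
lemma eqb_add: "eqb n A B \<Longrightarrow> eqb n C D \<Longrightarrow> eqb n (A + C) (B + D)" by (simp add: eqb_def)
lemma eqb_diff: "eqb n A B \<Longrightarrow> eqb n C D \<Longrightarrow> eqb n (A - C) (B - D)" by (simp add: eqb_def)
lemma eqb_mult: "eqb n A B \<Longrightarrow> eqb n C D \<Longrightarrow> eqb n (A * C) (B * D)"
  unfolding eqb_def fps_mult_nth by (auto intro!: sum.cong)
lemma eqb_power: "eqb n A B \<Longrightarrow> eqb n (A ^ k) (B ^ k)"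
  by (induction k) (simp_all add: eqb_refl eqb_mult)
lemma eqb_X: "eqb n A B \<Longrightarrow> eqb (Suc n) (fps_X * A) (fps_X * B)"
  unfolding eqb_def by (auto simp: less_Suc_eq_0_disj)
lemma eqb_shift: "eqb (Suc n) A B \<Longrightarrow> eqb n (fps_shift 1 A) (fps_shift 1 B)"
  unfolding eqb_def by simp
lemma eqb_0: "eqb 0 A B" by (simp add: eqb_def)

lemma contr_uniq:
  assumes "contr \<Phi>" "\<Phi> A = A" "\<Phi> B = B"
  shows "A = B"
proof -
  have "eqb n A B" for n
  proof (induction n)
    case 0 then show ?case by (rule eqb_0)
  next
    case (Suc n)
    then have "eqb (Suc n) (\<Phi> A) (\<Phi> B)" using assms(1) unfolding contr_def by blast
    then show ?case using assms(2,3) by simp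
  qed
  then show ?thesis by (intro fps_ext) (auto simp: eqb_def)
qed

lemma contr_fix:
  assumes c: "contr \<Phi>"
  shows "\<exists>Y. \<Phi> Y = Y"
proof -
  define it where "it k = (\<Phi> ^^ k) 0" for k
  have it_Suc: "it (Suc k) = \<Phi> (it k)" for k by (simp add: it_def)
  have step: "eqb k (it k) (it (Suc k))" for k
  proof (induction k)
    case 0 then show ?case by (rule eqb_0)
  next
    case (Suc k)
    then show ?case using c unfolding contr_def it_Suc[of "Suc k"] it_Suc[of k] by blast
  qed
  have far: "eqb k (it k) (it (k + d))" for k d
  proof (induction d)
    case 0 then show ?case by (simp add: eqb_refl)
  next
    case (Suc d)
    have "eqb k (it (k + d)) (it (Suc (k + d)))" using step[of "k + d"] by (rule eqb_mono) simp
    then show ?case using Suc eqb_trans by fastforce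
  qed
  define Y where "Y = Abs_fps (\<lambda>i. it (Suc i) $ i)"
  have Yn: "eqb n Y (it (Suc n))" for n
    unfolding eqb_def
  proof (intro allI impI)
    fix i assume "i < n"
    have "eqb (Suc i) (it (Suc i)) (it (Suc i + (n - i)))" by (rule far)
    then have "it (Suc i) $ i = it (Suc n) $ i" using \<open>i < n\<close> by (simp add: eqb_def)
    then show "Y $ i = it (Suc n) $ i" by (simp add: Y_def)
  qed
  have "\<Phi> Y = Y"
  proof (rule fps_ext)
    fix n
    have "eqb (Suc n) (\<Phi> Y) (\<Phi> (it (Suc n)))" using c Yn unfolding contr_def by blast
    then have "\<Phi> Y $ n = it (Suc (Suc n)) $ n" by (simp add: eqb_def it_Suc)
    also have "\<dots> = it (Suc n) $ n" using step[of "Suc n"] by (simp add: eqb_def)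
    finally show "\<Phi> Y $ n = Y $ n" by (simp add: Y_def)
  qed
  then show ?thesis by blast
qed

lemma X_shift: "f $ 0 = 0 \<Longrightarrow> fps_X * fps_shift 1 f = (f :: 'a::comm_ring_1 fps)"
  by (rule fps_ext) (auto simp: fps_X_mult_nth)

lemma nth0_power: "(f ^ k) $ 0 = (f $ 0) ^ k" for f :: "'a::comm_ring_1 fps"
  by (induction k) simp_all

definition qK :: "real fps \<Rightarrow> real fps" where
  "qK e = (1 + e) * (1 + e + 2 * e^2) - fps_X^2 * e * (1 + e)^3"

lemma Kt_shift: "Kt (1 + e) = e^2 - fps_X^2 * qK e"
  unfolding Kt_def Let_def qK_def by (simp add: algebra_simps power2_eq_square power3_eq_cube power4_eq_xxxx)

definition PsiX :: "real \<Rightarrow> real fps \<Rightarrow> real fps" where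
  "PsiX s V = fps_shift 1 (fps_const (s/2) * (qK (fps_X * (fps_const s + fps_X * V)) - 1 - fps_X * (fps_X * (V * V))))"

lemma eqb_qK: "eqb n A B \<Longrightarrow> eqb n (qK A) (qK B)"
  unfolding qK_def by (intro eqb_add eqb_diff eqb_mult eqb_power eqb_refl)

lemma contr_PsiX: "contr (PsiX s)"
  unfolding contr_def
proof (intro allI impI)
  fix n and A B :: "real fps"
  assume h: "eqb n A B"
  have e1: "eqb (Suc (Suc n)) (fps_X * (fps_const s + fps_X * A)) (fps_X * (fps_const s + fps_X * B))"
    by (intro eqb_X eqb_add eqb_refl h)
  have e2: "eqb (Suc (Suc n)) (fps_X * (fps_X * (A * A))) (fps_X * (fps_X * (B * B)))"
    by (intro eqb_X eqb_mult h)
  have "eqb (Suc (Suc n)) (fps_const (s/2) * (qK (fps_X * (fps_const s + fps_X * A)) - 1 - fps_X * (fps_X * (A * A))))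
     (fps_const (s/2) * (qK (fps_X * (fps_const s + fps_X * B)) - 1 - fps_X * (fps_X * (B * B))))"
    by (intro eqb_mult eqb_diff eqb_refl eqb_qK e1 e2)
  then show "eqb (Suc n) (PsiX s A) (PsiX s B)" unfolding PsiX_def by (rule eqb_shift)
qed

lemma qK_0: "e $ 0 = 0 \<Longrightarrow> qK e $ 0 = 1"
  unfolding qK_def by (simp add: nth0_power)

lemma fix_root:
  assumes s2: "s^2 = 1" and fx: "PsiX s V = V"
  shows "Kt (1 + fps_X * (fps_const s + fps_X * V)) = 0"
proof -
  define W where "W = fps_const s + fps_X * V"
  define G where "G = qK (fps_X * W) - 1 - fps_X * (fps_X * (V * V))"
  have G0: "(fps_const (s/2) * G) $ 0 = 0" unfolding G_def by (simp add: qK_0)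
  have "fps_X * V = fps_const (s/2) * G"
    using X_shift[OF G0] fx unfolding PsiX_def G_def W_def by simp
  then have "fps_const (2*s) * (fps_X * V) = fps_const (2*s) * fps_const (s/2) * G" by simp
  also have "fps_const (2*s) * fps_const (s/2) = (1 :: real fps)"
    using s2 by (simp add: power2_eq_square)
  finally have G: "G = fps_const (2*s) * (fps_X * V)" by simp
  have "qK (fps_X * W) = W^2"
  proof -
    have "qK (fps_X * W) = 1 + fps_X * (fps_X * (V * V)) + fps_const (2*s) * (fps_X * V)"
      using G unfolding G_def by (simp add: algebra_simps)
    also have "\<dots> = W^2"
    proof -
      have c2: "s * s = 1" using s2 by (simp add: power2_eq_square)
      have c3: "fps_const (2*s) = 2 * fps_const s" by (simp add: fps_numeral_fps_const)
      show ?thesis unfolding W_def c3 power2_eq_square by (simp add: algebra_simps c2)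
    qed
    finally show ?thesis .
  qed
  then show ?thesis unfolding W_def[symmetric] Kt_shift by (simp add: power2_eq_square algebra_simps)
qed
lemma X2_ne0: "(fps_X^2 :: real fps) \<noteq> 0" by simp

lemma root_fix:
  assumes r: "Kt X = 0" and x0: "X $ 0 = 1"
  shows "\<exists>V. (X$1)^2 = 1 \<and> PsiX (X$1) V = V \<and> X = 1 + fps_X * (fps_const (X$1) + fps_X * V)"
proof -
  define e where "e = X - 1"
  have e0: "e $ 0 = 0" using x0 by (simp add: e_def)
  define W where "W = fps_shift 1 e"
  have eW: "fps_X * W = e" unfolding W_def by (rule X_shift[OF e0])
  have "0 = Kt (1 + e)" using r by (simp add: e_def)
  also have "\<dots> = fps_X^2 * (W^2 - qK e)" unfolding Kt_shift eW[symmetric]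
    by (simp add: algebra_simps power2_eq_square)
  finally have WqK: "W^2 = qK e" using X2_ne0 by simp
  define s where "s = X $ 1"
  have sW: "W $ 0 = s" by (simp add: W_def s_def e_def)
  have s2: "s^2 = 1"
  proof -
    have "(W^2) $ 0 = 1" unfolding WqK by (rule qK_0[OF e0])
    then show ?thesis using sW by (simp add: nth0_power)
  qed
  define V where "V = fps_shift 1 (W - fps_const s)"
  have XV: "fps_X * V = W - fps_const s" unfolding V_def by (rule X_shift) (simp add: sW)
  then have Wv: "W = fps_const s + fps_X * V" by simp
  have c2: "s * s = 1" using s2 by (simp add: power2_eq_square)
  have "PsiX s V = fps_shift 1 (fps_const (s/2) * (W^2 - 1 - fps_X * (fps_X * (V * V))))"
    unfolding PsiX_def Wv[symmetric] eW WqK ..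
  also have "W^2 - 1 - fps_X * (fps_X * (V * V)) = fps_const (2*s) * (fps_X * V)"
  proof -
    have c3: "fps_const (2*s) = 2 * fps_const s" by (simp add: fps_numeral_fps_const)
    show ?thesis unfolding Wv c3 power2_eq_square by (simp add: algebra_simps c2)
  qed
  also have "fps_const (s/2) * (fps_const (2*s) * (fps_X * V)) = V * fps_X"
  proof -
    have "s/2 * (2*s) = 1" using c2 by simp
    then have "fps_const (s/2) * fps_const (2*s) = (1::real fps)" by simp
    then have "fps_const (s/2) * (fps_const (2*s) * (fps_X * V)) = fps_X * V"
      by (simp only: mult.assoc[symmetric] mult_1)
    then show ?thesis by (simp only: mult.commute)
  qed
  finally have "PsiX s V = V" by (simp only: fps_shift_times_fps_X')
  moreover have "X = 1 + fps_X * (fps_const s + fps_X * V)" using eW Wv by (simp add: e_def)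
  ultimately show ?thesis using s2 unfolding s_def by blast
qed

lemma X_roots: "\<exists>X1 X2 :: real fps.
     X1 \<noteq> X2 \<and> Kt X1 = 0 \<and> Kt X2 = 0 \<and> fps_nth X1 0 = 1 \<and> fps_nth X2 0 = 1 \<and>
     (\<forall>X :: real fps. Kt X = 0 \<and> fps_nth X 0 = 1 \<longrightarrow> X = X1 \<or> X = X2) \<and>
     fps_nth X1 1 = -1 \<and> fps_nth X2 1 = 1"
proof -
  obtain V1 where V1: "PsiX (-1) V1 = V1" using contr_fix[OF contr_PsiX] by blast
  obtain V2 where V2: "PsiX 1 V2 = V2" using contr_fix[OF contr_PsiX] by blast
  define X1 where "X1 = 1 + fps_X * (fps_const (-1) + fps_X * V1)"
  define X2 where "X2 = 1 + fps_X * (fps_const 1 + fps_X * V2)"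
  have r1: "Kt X1 = 0" unfolding X1_def by (rule fix_root[OF _ V1]) simp
  have r2: "Kt X2 = 0" unfolding X2_def by (rule fix_root[OF _ V2]) simp
  have c1: "X1 $ 1 = -1" "X1 $ 0 = 1" by (simp_all add: X1_def)
  have c2: "X2 $ 1 = 1" "X2 $ 0 = 1" by (simp_all add: X2_def)
  have ne: "X1 \<noteq> X2" using c1 c2 by auto
  have uniq: "X = X1 \<or> X = X2" if hX: "Kt X = 0" "X $ 0 = 1" for X
  proof -
    obtain V where V: "(X$1)^2 = 1" "PsiX (X$1) V = V" "X = 1 + fps_X * (fps_const (X$1) + fps_X * V)"
      using root_fix[OF hX] by blast
    have "X$1 = 1 \<or> X$1 = -1" using V(1) by (simp add: power2_eq_1_iff)
    then show ?thesis
    proof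
      assume h: "X$1 = 1"
      then have "V = V2" using contr_uniq[OF contr_PsiX, of 1 V V2] V(2) V2 by simp
      then show ?thesis using V(3) h by (simp add: X2_def)
    next
      assume h: "X$1 = -1"
      then have "V = V1" using contr_uniq[OF contr_PsiX, of "-1" V V1] V(2) V1 by simp
      then show ?thesis using V(3) h by (simp add: X1_def)
    qed
  qed
  show ?thesis using ne r1 r2 c1 c2 uniq by blast
qed
definition Km :: "real fps \<Rightarrow> real fps" where
  "Km u = (let z = fps_X^2 in z^2*u^4 - 2*z^2*u^3 - 2*z*u^3 + 3*z*u^2 + u^2 - z*u - 2*u + 1)"

definition rr :: "real fps \<Rightarrow> real fps" where
  "rr Y = -3*Y^2 - 2*Y - 2*fps_X^2*Y^3 + 2*(fps_X^2)^2*Y^3 + (fps_X^2)^3*Y^4"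

lemma Km_shift: "Km (1 + fps_X^2 * Y) = (fps_X^2)^2 * (Y^2 - Y - 1 + fps_X^2 * rr Y)"
  unfolding Km_def Let_def rr_def by (simp add: algebra_simps power2_eq_square power3_eq_cube power4_eq_xxxx)

definition PsiU :: "real \<Rightarrow> real fps \<Rightarrow> real fps" where
  "PsiU y V = fps_shift 1 (fps_const (-1/(2*y-1)) * (fps_X * (fps_X * (V * V)) + fps_X * (fps_X * rr (fps_const y + fps_X * V))))"

lemma eqb_rr: "eqb n A B \<Longrightarrow> eqb n (rr A) (rr B)"
  unfolding rr_def by (intro eqb_add eqb_diff eqb_mult eqb_power eqb_refl)

lemma contr_PsiU: "contr (PsiU y)"
  unfolding contr_def
proof (intro allI impI)
  fix n and A B :: "real fps"
  assume h: "eqb n A B"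
  have e1: "eqb (Suc n) (fps_const y + fps_X * A) (fps_const y + fps_X * B)"
    by (intro eqb_X eqb_add eqb_refl h)
  have e2: "eqb (Suc (Suc n)) (fps_X * (fps_X * (A * A))) (fps_X * (fps_X * (B * B)))"
    by (intro eqb_X eqb_mult h)
  have e3: "eqb (Suc (Suc n)) (fps_X * (fps_X * rr (fps_const y + fps_X * A))) (fps_X * (fps_X * rr (fps_const y + fps_X * B)))"
    by (intro eqb_X eqb_mono[OF eqb_rr[OF e1]]) simp
  have "eqb (Suc (Suc n)) (fps_const (-1/(2*y-1)) * (fps_X * (fps_X * (A * A)) + fps_X * (fps_X * rr (fps_const y + fps_X * A))))
     (fps_const (-1/(2*y-1)) * (fps_X * (fps_X * (B * B)) + fps_X * (fps_X * rr (fps_const y + fps_X * B))))"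
    by (intro eqb_mult eqb_add eqb_refl e2 e3)
  then show "eqb (Suc n) (PsiU y A) (PsiU y B)" unfolding PsiU_def by (rule eqb_shift)
qed

lemma fixU_root:
  assumes y: "y^2 - y - 1 = 0" and fx: "PsiU y V = V"
  shows "Km (1 + fps_X^2 * (fps_const y + fps_X * V)) = 0"
proof -
  define Y where "Y = fps_const y + fps_X * V"
  define H where "H = fps_X * (fps_X * (V * V)) + fps_X * (fps_X * rr Y)"
  have y1: "2*y - 1 \<noteq> 0"
  proof
    assume h: "2*y - 1 = 0"
    have "(2*y-1)^2 = 4*(y^2-y-1) + 5" by (simp add: power2_eq_square algebra_simps)
    then show False using h y by simp
  qed
  have H0: "(fps_const (-1/(2*y-1)) * H) $ 0 = 0" unfolding H_def by simp
  have XV: "fps_X * V = fps_const (-1/(2*y-1)) * H"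
    using X_shift[OF H0] fx unfolding PsiU_def H_def Y_def by simp
  have a: "fps_const (2*y-1) * (fps_X * V) = fps_const ((2*y-1) * (-1/(2*y-1))) * H"
    unfolding XV by (simp add: mult.assoc)
  have b: "(2*y-1) * (-1/(2*y-1)) = -1" using y1 by simp
  have m1: "fps_const (-1::real) = -1" by (metis fps_const_1_eq_1 fps_const_neg)
  from a have "fps_const (2*y-1) * (fps_X * V) = -1 * H" by (simp only: b m1)
  then have E: "fps_const (2*y-1) * (fps_X * V) + H = 0" by simp
  have "Y^2 - Y - 1 + fps_X^2 * rr Y = fps_const (y^2 - y - 1) + (fps_const (2*y-1) * (fps_X * V) + H)"
  proof -
    have c3: "fps_const (2*y-1) = 2 * fps_const y - 1" by (simp add: fps_numeral_fps_const)
    have c4: "fps_const (y^2 - y - 1) = fps_const y * fps_const y - fps_const y - 1" by (simp add: power2_eq_square)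
    show ?thesis unfolding Y_def H_def c3 c4 by (simp add: algebra_simps power2_eq_square)
  qed
  also have "\<dots> = 0" using E y by simp
  finally show ?thesis unfolding Y_def[symmetric] Km_shift by simp
qed

lemma U_roots: "\<exists>Y1 Y2. Km (1 + fps_X^2 * Y1) = 0 \<and> Km (1 + fps_X^2 * Y2) = 0 \<and> Y1 $ 0 \<noteq> Y2 $ 0"
proof -
  define y1 :: real where "y1 = (1 + sqrt 5)/2"
  define y2 :: real where "y2 = (1 - sqrt 5)/2"
  have s5: "sqrt 5 * sqrt 5 = (5::real)" by simp
  have q1: "y1^2 - y1 - 1 = 0" unfolding y1_def power2_eq_square using s5 by (simp add: field_simps; simp add: algebra_simps)
  have q2: "y2^2 - y2 - 1 = 0" unfolding y2_def power2_eq_square using s5 by (simp add: field_simps; simp add: algebra_simps)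
  obtain V1 where V1: "PsiU y1 V1 = V1" using contr_fix[OF contr_PsiU] by blast
  obtain V2 where V2: "PsiU y2 V2 = V2" using contr_fix[OF contr_PsiU] by blast
  have ne: "y1 \<noteq> y2" unfolding y1_def y2_def by simp
  show ?thesis
    using fixU_root[OF q1 V1] fixU_root[OF q2 V2] ne
    by (intro exI[of _ "fps_const y1 + fps_X * V1"] exI[of _ "fps_const y2 + fps_X * V2"]) simp
qed



definition zsum :: "(nat \<Rightarrow> real fps) \<Rightarrow> real fps" where
  "zsum w = Abs_fps (\<lambda>m. (\<Sum>n\<le>m. fps_X^(2*n) * w n) $ m)"

lemma zsum_trunc:
  assumes "m \<le> k"
  shows "zsum w $ m = (\<Sum>n\<le>k. fps_X^(2*n) * w n) $ m"
proof -
  have "(\<Sum>n\<le>k. fps_X^(2*n) * w n) = (\<Sum>n\<le>m. fps_X^(2*n) * w n) + (\<Sum>n\<in>{m<..k}. fps_X^(2*n) * w n)"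
  proof -
    have "{..k} = {..m} \<union> {m<..k}" using assms by auto
    then show ?thesis by (simp only:) (rule sum.union_disjoint, auto)
  qed
  moreover have "(\<Sum>n\<in>{m<..k}. fps_X^(2*n) * w n) $ m = 0"
    unfolding fps_sum_nth by (rule sum.neutral) (auto simp: fps_X_power_mult_nth)
  ultimately show ?thesis by (simp add: zsum_def)
qed

lemma zsum_add: "zsum (\<lambda>n. v n + w n) = zsum v + zsum w"
  by (rule fps_ext) (simp add: zsum_def sum.distrib distrib_left)

lemma zsum_diff: "zsum (\<lambda>n. v n - w n) = zsum v - zsum w"
  by (rule fps_ext) (simp add: zsum_def sum_subtractf right_diff_distrib)

lemma zsum_mult: "zsum (\<lambda>n. c * w n) = c * zsum w"
proof (rule fps_ext)
  fix m
  let ?T = "\<Sum>n\<le>m. fps_X^(2*n) * w n"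
  have "(c * zsum w) $ m = (\<Sum>i=0..m. c$i * zsum w $ (m - i))" by (rule fps_mult_nth)
  also have "\<dots> = (\<Sum>i=0..m. c$i * ?T $ (m - i))"
    by (rule sum.cong[OF refl]) (simp add: zsum_trunc)
  also have "\<dots> = (c * ?T) $ m" by (simp add: fps_mult_nth)
  also have "c * ?T = (\<Sum>n\<le>m. fps_X^(2*n) * (c * w n))"
    by (simp add: sum_distrib_left mult.left_commute)
  finally show "zsum (\<lambda>n. c * w n) $ m = (c * zsum w) $ m"
    by (simp add: zsum_def)
qed

lemma zsum_shift: "zsum w = w 0 + fps_X^2 * zsum (\<lambda>n. w (Suc n))"
proof (rule fps_ext)
  fix m
  let ?T = "\<Sum>n\<le>m. fps_X^(2*n) * w (Suc n)"
  have A: "zsum w $ m = (\<Sum>n\<le>Suc m. fps_X^(2*n) * w n) $ m" by (rule zsum_trunc) simp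
  have B: "(\<Sum>n\<le>Suc m. fps_X^(2*n) * w n) = w 0 + fps_X^2 * ?T"
  proof -
    have e: "fps_X^(2*Suc n) * w (Suc n) = fps_X^2 * (fps_X^(2*n) * w (Suc n))" for n :: nat
    proof -
      have "2 * Suc n = 2 + 2*n" by simp
      then have "(fps_X::real fps)^(2*Suc n) = fps_X^2 * fps_X^(2*n)" by (simp only: power_add)
      then show ?thesis by (simp only: mult.assoc)
    qed
    show ?thesis by (subst sum.atMost_Suc_shift) (simp only: e sum_distrib_left[symmetric], simp)
  qed
  have C: "(fps_X^2 * ?T) $ m = (fps_X^2 * zsum (\<lambda>n. w (Suc n))) $ m"
    using zsum_trunc[of "m - 2" m "\<lambda>n. w (Suc n)"] by (simp add: fps_X_power_mult_nth)
  show "zsum w $ m = (w 0 + fps_X^2 * zsum (\<lambda>n. w (Suc n))) $ m"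
    by (simp only: A B fps_add_nth C)
qed

lemma zsum_const: "zsum (\<lambda>n. 0) = 0"
  by (rule fps_ext) (simp add: zsum_def)

definition FF :: "real fps" where "FF = zsum (\<lambda>n. of_nat (card (VV n)))"
definition DD :: "real fps" where "DD = zsum (\<lambda>n. of_nat (dd n))"
definition WW :: "real fps \<Rightarrow> real fps" where "WW U = zsum (ww U)"
definition CC :: "real fps \<Rightarrow> real fps" where "CC U = zsum (cr U)"

lemma GF1: "(U - 1) * (WW U - 1) = fps_X^2 * (U^2 * WW U - U * FF + U * (U - 1) * CC U)"
proof -
  have "WW U - 1 = fps_X^2 * zsum (\<lambda>n. ww U (Suc n))"
    unfolding WW_def by (subst zsum_shift) (simp add: ww0)
  then have "(U - 1) * (WW U - 1) = fps_X^2 * zsum (\<lambda>n. (U - 1) * ww U (Suc n))"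
    by (simp add: zsum_mult mult.left_commute)
  also have "zsum (\<lambda>n. (U - 1) * ww U (Suc n)) = zsum (\<lambda>n. U^2 * ww U n - U * of_nat (card (VV n)) + U * (U - 1) * cr U n)"
    by (simp only: R1n)
  also have "\<dots> = U^2 * WW U - U * FF + U * (U - 1) * CC U"
    unfolding WW_def FF_def CC_def by (simp only: zsum_add zsum_diff zsum_mult)
  finally show ?thesis .
qed

lemma GF2: "(U - 1)^2 * CC U = fps_X^2 * (U^2 * WW U - U^2 * FF - U * (U - 1) * DD + U * (U - 1)^2 * CC U)"
proof -
  have "CC U = fps_X^2 * zsum (\<lambda>n. cr U (Suc n))"
    unfolding CC_def by (subst zsum_shift) (simp add: cr0)
  then have "(U - 1)^2 * CC U = fps_X^2 * zsum (\<lambda>n. (U - 1)^2 * cr U (Suc n))"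
    by (simp add: zsum_mult mult.left_commute)
  also have "zsum (\<lambda>n. (U - 1)^2 * cr U (Suc n)) = zsum (\<lambda>n. U^2 * ww U n - U^2 * of_nat (card (VV n)) - U * (U - 1) * of_nat (dd n) + U * (U - 1)^2 * cr U n)"
    by (simp only: R2n)
  also have "\<dots> = U^2 * WW U - U^2 * FF - U * (U - 1) * DD + U * (U - 1)^2 * CC U"
    unfolding WW_def FF_def CC_def DD_def by (simp only: zsum_add zsum_diff zsum_mult)
  finally show ?thesis .
qed

lemma kernel_eq:
  "Km U * WW U = (U - 1)^2 * (1 - fps_X^2 * U) - fps_X^2 * U * (U - 1 + fps_X^2 * U) * FF - (fps_X^2)^2 * U^2 * (U - 1) * DD"
proof -
  define z :: "real fps" where "z = fps_X^2"
  have g1: "(U - 1) * (WW U - 1) = z * (U^2 * WW U - U * FF + U * (U - 1) * CC U)" using GF1 z_def by simp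
  have g2: "(U - 1)^2 * CC U = z * (U^2 * WW U - U^2 * FF - U * (U - 1) * DD + U * (U - 1)^2 * CC U)" using GF2 z_def by simp
  have "Km U * WW U - ((U - 1)^2 * (1 - z * U) - z * U * (U - 1 + z * U) * FF - z^2 * U^2 * (U - 1) * DD)
     = (U - 1) * (1 - z * U) * ((U - 1) * (WW U - 1) - z * (U^2 * WW U - U * FF + U * (U - 1) * CC U))
       + z * U * ((U - 1)^2 * CC U - z * (U^2 * WW U - U^2 * FF - U * (U - 1) * DD + U * (U - 1)^2 * CC U))"
    unfolding Km_def Let_def z_def[symmetric] by (simp add: algebra_simps power2_eq_square power3_eq_cube power4_eq_xxxx)
  also have "\<dots> = 0" using g1 g2 by simp
  finally show ?thesis unfolding z_def by simp
qed
lemma FF_compose: "fps_compose (Abs_fps (\<lambda>n. real (I_count n))) (fps_X^2) = FF"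
proof (rule fps_ext)
  fix m
  have "fps_compose (Abs_fps (\<lambda>n. real (I_count n))) (fps_X^2) $ m = (\<Sum>i=0..m. real (I_count i) * (if m = 2*i then 1 else 0))"
    unfolding fps_compose_nth by (simp add: power_mult[symmetric])
  also have "\<dots> = (\<Sum>i\<le>m. (fps_X^(2*i) * of_nat (card (VV i)) :: real fps) $ m)"
    by (rule sum.cong) (auto simp: fps_X_power_mult_nth I_count_VV)
  also have "\<dots> = FF $ m" by (simp add: FF_def zsum_def fps_sum_nth)
  finally show "fps_compose (Abs_fps (\<lambda>n. real (I_count n))) (fps_X^2) $ m = FF $ m" .
qed



lemma cert_K12: fixes U1 U2 z :: "'a::idom"
  shows "(U1 - U2) * (U1^3*z^2 + U1^2*U2*z^2 - 2*U1^2*z^2 - 2*U1^2*z + U1*U2^2*z^2 - 2*U1*U2*z^2 - 2*U1*U2*z + 3*U1*z + U1 + U2^3*z^2 - 2*U2^2*z^2 - 2*U2^2*z + 3*U2*z + U2 - z - 2) = (z^2*U1^4 - 2*z^2*U1^3 - 2*z*U1^3 + 3*z*U1^2 + U1^2 - z*U1 - 2*U1 + 1) - (z^2*U2^4 - 2*z^2*U2^3 - 2*z*U2^3 + 3*z*U2^2 + U2^2 - z*U2 - 2*U2 + 1)"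
  by algebra

lemma cert_c1: fixes U1 U2 z :: "'a::idom"
  shows "z^4 * (U1^5*U2^3*z^6 + U1^5*U2^3*z^5 - U1^5*U2^2*z^5 + 2*U1^4*U2^4*z^6 + 2*U1^4*U2^4*z^5 - 3*U1^4*U2^3*z^6 - 7*U1^4*U2^3*z^5 - 2*U1^4*U2^3*z^4 + 3*U1^4*U2^2*z^5 + 2*U1^4*U2^2*z^4 + U1^3*U2^5*z^6 + U1^3*U2^5*z^5 - 3*U1^3*U2^4*z^6 - 7*U1^3*U2^4*z^5 - 2*U1^3*U2^4*z^4 + 2*U1^3*U2^3*z^6 + 9*U1^3*U2^3*z^5 + 6*U1^3*U2^3*z^4 - U1^3*U2^2*z^5 - 2*U1^3*U2^2*z^4 + U1^3*U2^2*z^3 - U1^3*U2*z^4 - U1^3*U2*z^3 - U1^2*U2^5*z^5 + 3*U1^2*U2^4*z^5 + 2*U1^2*U2^4*z^4 - U1^2*U2^3*z^5 - 2*U1^2*U2^3*z^4 + U1^2*U2^3*z^3 - U1^2*U2^2*z^5 - 2*U1^2*U2^2*z^4 - 3*U1^2*U2^2*z^3 + U1^2*U2*z^4 + 2*U1^2*U2*z^3 - U1*U2^3*z^4 - U1*U2^3*z^3 + U1*U2^2*z^4 + 2*U1*U2^2*z^3 - U1*U2*z^3) = (U1*U2^3*z^8 + U1*U2^3*z^7 - U1*U2^2*z^7 + 2*U2^4*z^8 + 2*U2^4*z^7 - U2^3*z^8 - 3*U2^3*z^7 + U2^2*z^7) * (z^2*U1^4 - 2*z^2*U1^3 - 2*z*U1^3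 + 3*z*U1^2 + U1^2 - z*U1 - 2*U1 + 1) + (U1^3*U2^5*z^10 + U1^3*U2^5*z^9 + U1^3*U2^4*z^10 + U1^3*U2^4*z^9 + 2*U1^3*U2^4*z^8 - 2*U1^3*U2^3*z^9 - 4*U1^3*U2^3*z^8 - U1^3*U2^3*z^7 + U1^3*U2^2*z^9 + 3*U1^3*U2^2*z^8 + 2*U1^3*U2^2*z^7 - U1^3*U2*z^8 - U1^3*U2*z^7 - U1^2*U2^5*z^9 - 3*U1^2*U2^4*z^9 - 6*U1^2*U2^4*z^8 - 2*U1^2*U2^4*z^7 + 3*U1^2*U2^3*z^9 + 11*U1^2*U2^3*z^8 + 6*U1^2*U2^3*z^7 - U1^2*U2^2*z^9 - 6*U1^2*U2^2*z^8 - 6*U1^2*U2^2*z^7 + U1^2*U2*z^8 + 2*U1^2*U2*z^7 + 2*U1*U2^4*z^9 + 6*U1*U2^4*z^8 + 4*U1*U2^4*z^7 - U1*U2^3*z^9 - 7*U1*U2^3*z^8 - 8*U1*U2^3*z^7 + 2*U1*U2^2*z^8 + 5*U1*U2^2*z^7 - U1*U2*z^7 - 2*U2^4*z^8 - 2*U2^4*z^7 + U2^3*z^8 + 3*U2^3*z^7 - U2^2*z^7)"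
  by algebra

lemma cert_c2: fixes U1 U2 z :: "'a::idom"
  shows "z^2 * (U1^3*U2^5*z^10 + U1^3*U2^5*z^9 + U1^3*U2^4*z^10 + U1^3*U2^4*z^9 + 2*U1^3*U2^4*z^8 - 2*U1^3*U2^3*z^9 - 4*U1^3*U2^3*z^8 - U1^3*U2^3*z^7 + U1^3*U2^2*z^9 + 3*U1^3*U2^2*z^8 + 2*U1^3*U2^2*z^7 - U1^3*U2*z^8 - U1^3*U2*z^7 - U1^2*U2^5*z^9 - 3*U1^2*U2^4*z^9 - 6*U1^2*U2^4*z^8 - 2*U1^2*U2^4*z^7 + 3*U1^2*U2^3*z^9 + 11*U1^2*U2^3*z^8 + 6*U1^2*U2^3*z^7 - U1^2*U2^2*z^9 - 6*U1^2*U2^2*z^8 - 6*U1^2*U2^2*z^7 + U1^2*U2*z^8 + 2*U1^2*U2*z^7 + 2*U1*U2^4*z^9 + 6*U1*U2^4*z^8 + 4*U1*U2^4*z^7 - U1*U2^3*z^9 - 7*U1*U2^3*z^8 - 8*U1*U2^3*z^7 + 2*U1*U2^2*z^8 + 5*U1*U2^2*z^7 - U1*U2*z^7 - 2*U2^4*z^8 - 2*U2^4*z^7 + U2^3*z^8 + 3*U2^3*z^7 - U2^2*z^7) = (U2^5*z^10 + U2^5*z^9 + U2^4*z^10 + U2^4*z^9 + 2*U2^4*z^8 - 2*U2^3*z^9 - 4*U2^3*z^8 - U2^3*z^7 + U2^2*z^9 + 3*U2^2*z^8 + 2*U2^2*z^7 - U2*z^8 - U2*z^7) * (U1^3*z^2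 + U1^2*U2*z^2 - 2*U1^2*z^2 - 2*U1^2*z + U1*U2^2*z^2 - 2*U1*U2*z^2 - 2*U1*U2*z + 3*U1*z + U1 + U2^3*z^2 - 2*U2^2*z^2 - 2*U2^2*z + 3*U2*z + U2 - z - 2) + (0 - U1^2*U2^6*z^12 - U1^2*U2^6*z^11 + U1^2*U2^5*z^12 + 2*U1^2*U2^5*z^11 + 2*U1^2*U2^4*z^12 + 3*U1^2*U2^4*z^11 + 4*U1^2*U2^4*z^10 + 3*U1^2*U2^4*z^9 - 2*U1^2*U2^3*z^11 - 4*U1^2*U2^3*z^10 - 6*U1^2*U2^3*z^9 - 2*U1^2*U2^3*z^8 + U1^2*U2^2*z^11 + 3*U1^2*U2^2*z^10 + 5*U1^2*U2^2*z^9 + 4*U1^2*U2^2*z^8 - U1^2*U2*z^10 - 2*U1^2*U2*z^9 - 2*U1^2*U2*z^8 - U1*U2^7*z^12 - U1*U2^7*z^11 + U1*U2^6*z^12 + 3*U1*U2^6*z^11 + 2*U1*U2^5*z^12 + 3*U1*U2^5*z^11 + 6*U1*U2^5*z^10 + 4*U1*U2^5*z^9 - 6*U1*U2^4*z^11 - 13*U1*U2^4*z^10 - 15*U1*U2^4*z^9 - 4*U1*U2^4*z^8 + U1*U2^3*z^11 + 8*U1*U2^3*z^10 + 17*U1*U2^3*z^9 + 11*U1*U2^3*z^8 + U1*U2^3*z^7 - 3*U1*U2^2*z^10 - 9*U1*U2^2*z^9 - 11*U1*U2^2*z^8 - 2*U1*U2^2*z^7 + 2*U1*U2*z^9 + 4*U1*U2*z^8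 + U1*U2*z^7 - U2^8*z^12 - U2^8*z^11 + U2^7*z^12 + 3*U2^7*z^11 + 2*U2^6*z^12 + 3*U2^6*z^11 + 6*U2^6*z^10 + 4*U2^6*z^9 - 7*U2^5*z^11 - 16*U2^5*z^10 - 17*U2^5*z^9 - 4*U2^5*z^8 + 3*U2^4*z^11 + 16*U2^4*z^10 + 27*U2^4*z^9 + 15*U2^4*z^8 + U2^4*z^7 - 6*U2^3*z^10 - 19*U2^3*z^9 - 20*U2^3*z^8 - 4*U2^3*z^7 + U2^2*z^10 + 7*U2^2*z^9 + 12*U2^2*z^8 + 5*U2^2*z^7 - U2*z^9 - 3*U2*z^8 - 2*U2*z^7)"
  by algebra

lemma cert_c3: fixes U1 U2 z :: "'a::idom"
  shows "z^8 * (0 - U1^2*U2^6*z^12 - U1^2*U2^6*z^11 + U1^2*U2^5*z^12 + 2*U1^2*U2^5*z^11 + 2*U1^2*U2^4*z^12 + 3*U1^2*U2^4*z^11 + 4*U1^2*U2^4*z^10 + 3*U1^2*U2^4*z^9 - 2*U1^2*U2^3*z^11 - 4*U1^2*U2^3*z^10 - 6*U1^2*U2^3*z^9 - 2*U1^2*U2^3*z^8 + U1^2*U2^2*z^11 + 3*U1^2*U2^2*z^10 + 5*U1^2*U2^2*z^9 + 4*U1^2*U2^2*z^8 - U1^2*U2*z^10 - 2*U1^2*U2*z^9 - 2*U1^2*U2*z^8 - U1*U2^7*z^12 - U1*U2^7*z^11 + U1*U2^6*z^12 + 3*U1*U2^6*z^11 + 2*U1*U2^5*z^12 + 3*U1*U2^5*z^11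 + 6*U1*U2^5*z^10 + 4*U1*U2^5*z^9 - 6*U1*U2^4*z^11 - 13*U1*U2^4*z^10 - 15*U1*U2^4*z^9 - 4*U1*U2^4*z^8 + U1*U2^3*z^11 + 8*U1*U2^3*z^10 + 17*U1*U2^3*z^9 + 11*U1*U2^3*z^8 + U1*U2^3*z^7 - 3*U1*U2^2*z^10 - 9*U1*U2^2*z^9 - 11*U1*U2^2*z^8 - 2*U1*U2^2*z^7 + 2*U1*U2*z^9 + 4*U1*U2*z^8 + U1*U2*z^7 - U2^8*z^12 - U2^8*z^11 + U2^7*z^12 + 3*U2^7*z^11 + 2*U2^6*z^12 + 3*U2^6*z^11 + 6*U2^6*z^10 + 4*U2^6*z^9 - 7*U2^5*z^11 - 16*U2^5*z^10 - 17*U2^5*z^9 - 4*U2^5*z^8 + 3*U2^4*z^11 + 16*U2^4*z^10 + 27*U2^4*z^9 + 15*U2^4*z^8 + U2^4*z^7 - 6*U2^3*z^10 - 19*U2^3*z^9 - 20*U2^3*z^8 - 4*U2^3*z^7 + U2^2*z^10 + 7*U2^2*z^9 + 12*U2^2*z^8 + 5*U2^2*z^7 - U2*z^9 - 3*U2*z^8 - 2*U2*z^7) = (0 - U1^2*U2^2*z^18 - U1^2*U2^2*z^17 - U1^2*U2*z^18 - 2*U1^2*U2*z^17 - 2*U1^2*U2*z^16 - U1*U2^3*z^18 - U1*U2^3*z^17 - U1*U2^2*z^18 - U1*U2^2*z^17 - 2*U1*U2^2*z^16 + 2*U1*U2*z^17 + 4*U1*U2*z^16 + U1*U2*z^15 -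 U2^4*z^18 - U2^4*z^17 - U2^3*z^18 - U2^3*z^17 - 2*U2^3*z^16 + 2*U2^2*z^17 + 4*U2^2*z^16 + U2^2*z^15 - U2*z^17 - 3*U2*z^16 - 2*U2*z^15) * (z^2*U2^4 - 2*z^2*U2^3 - 2*z*U2^3 + 3*z*U2^2 + U2^2 - z*U2 - 2*U2 + 1)"
  by algebra

lemma cert_phi: fixes U1 U2 z :: "'a::idom"
  shows "(z*(U1*U2)*(z*(U1*U2) - z*(2*z*(U1*U2) + 2*(U1*U2) - z*(U1*U2)*(U1 + U2)) + z + 1)) * (((U1 - 1)^2 * (1 - z*U1))*(z^2*U2^2*(U2 - 1)) - ((U2 - 1)^2 * (1 - z*U2))*(z^2*U1^2*(U1 - 1))) - (((U1*U2) - (2*z*(U1*U2) + 2*(U1*U2) - z*(U1*U2)*(U1 + U2)) + 1)*(z*(U1*U2) - 1)) * ((z*U1*(U1 - 1 + z*U1))*(z^2*U2^2*(U2 - 1)) - (z*U2*(U2 - 1 + z*U2))*(z^2*U1^2*(U1 - 1))) = (U1 - U2) * (U1^5*U2^3*z^6 + U1^5*U2^3*z^5 - U1^5*U2^2*z^5 + 2*U1^4*U2^4*z^6 + 2*U1^4*U2^4*z^5 - 3*U1^4*U2^3*z^6 - 7*U1^4*U2^3*z^5 - 2*U1^4*U2^3*z^4 + 3*U1^4*U2^2*z^5 + 2*U1^4*U2^2*z^4 + U1^3*U2^5*z^6 + U1^3*U2^5*z^5 - 3*U1^3*U2^4*z^6 - 7*U1^3*U2^4*z^5 - 2*U1^3*U2^4*z^4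 + 2*U1^3*U2^3*z^6 + 9*U1^3*U2^3*z^5 + 6*U1^3*U2^3*z^4 - U1^3*U2^2*z^5 - 2*U1^3*U2^2*z^4 + U1^3*U2^2*z^3 - U1^3*U2*z^4 - U1^3*U2*z^3 - U1^2*U2^5*z^5 + 3*U1^2*U2^4*z^5 + 2*U1^2*U2^4*z^4 - U1^2*U2^3*z^5 - 2*U1^2*U2^3*z^4 + U1^2*U2^3*z^3 - U1^2*U2^2*z^5 - 2*U1^2*U2^2*z^4 - 3*U1^2*U2^2*z^3 + U1^2*U2*z^4 + 2*U1^2*U2*z^3 - U1*U2^3*z^4 - U1*U2^3*z^3 + U1*U2^2*z^4 + 2*U1*U2^2*z^3 - U1*U2*z^3)"
  by algebra

lemma zcancel: fixes z R Q K :: "'a::idom"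
  assumes "z^k * R = Q * K" "K = 0" "z \<noteq> 0" shows "R = 0"
  using assms by simp
lemma zcancel2: fixes z R Q K R' :: "'a::idom"
  assumes "z^k * R = Q * K + R'" "K = 0" "R' = 0" "z \<noteq> 0" shows "R = 0"
  using assms by simp
lemma dcancel: fixes a b L K1 K2 :: "'a::idom"
  assumes "(a - b) * L = K1 - K2" "K1 = 0" "K2 = 0" "a \<noteq> b" shows "L = 0"
  using assms by simp
lemma cert_all:
  fixes U1 U2 z :: "'a::idom"
  assumes k1: "(z^2*U1^4 - 2*z^2*U1^3 - 2*z*U1^3 + 3*z*U1^2 + U1^2 - z*U1 - 2*U1 + 1) = 0" and k2: "(z^2*U2^4 - 2*z^2*U2^3 - 2*z*U2^3 + 3*z*U2^2 + U2^2 - z*U2 - 2*U2 + 1) = 0" and ne: "U1 \<noteq> U2" and z: "z \<noteq> 0"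
  shows "(z*(U1*U2)*(z*(U1*U2) - z*(2*z*(U1*U2) + 2*(U1*U2) - z*(U1*U2)*(U1 + U2)) + z + 1)) * (((U1 - 1)^2 * (1 - z*U1))*(z^2*U2^2*(U2 - 1)) - ((U2 - 1)^2 * (1 - z*U2))*(z^2*U1^2*(U1 - 1))) - (((U1*U2) - (2*z*(U1*U2) + 2*(U1*U2) - z*(U1*U2)*(U1 + U2)) + 1)*(z*(U1*U2) - 1)) * ((z*U1*(U1 - 1 + z*U1))*(z^2*U2^2*(U2 - 1)) - (z*U2*(U2 - 1 + z*U2))*(z^2*U1^2*(U1 - 1))) = 0"
proof -
  note k12 = dcancel[OF cert_K12[of U1 U2 z] k1 k2 ne]
  note r2 = zcancel[OF cert_c3[of z U1 U2] k2 z]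
  note r1 = zcancel2[OF cert_c2[of z U1 U2] k12 r2 z]
  note psi = zcancel2[OF cert_c1[of z U1 U2] k1 r1 z]
  show ?thesis unfolding cert_phi psi by (rule mult_zero_right)
qed

lemma main_alg:
  fixes z U1 U2 Y1 Y2 F D P S :: "'a::idom"
  assumes k1: "(z^2*U1^4 - 2*z^2*U1^3 - 2*z*U1^3 + 3*z*U1^2 + U1^2 - z*U1 - 2*U1 + 1) = 0" and k2: "(z^2*U2^4 - 2*z^2*U2^3 - 2*z*U2^3 + 3*z*U2^2 + U2^2 - z*U2 - 2*U2 + 1) = 0" and ne: "U1 \<noteq> U2" and z: "z \<noteq> 0"
    and hP: "P = U1*U2" and hS: "S = 2*z*P + 2*P - z*P*(U1 + U2)"
    and e1: "(U1 - 1)^2 * (1 - z*U1) = z*U1*(U1 - 1 + z*U1)*F + z^2*U1^2*(U1 - 1)*D"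
    and e2: "(U2 - 1)^2 * (1 - z*U2) = z*U2*(U2 - 1 + z*U2)*F + z^2*U2^2*(U2 - 1)*D"
    and u1: "U1 = 1 + z*Y1" and u2: "U2 = 1 + z*Y2"
    and nz: "z^5*U1*U2*(Y2 - Y1)*(z*Y1*Y2 + U1*U2) \<noteq> 0"
  shows "(z*P*(z*P - z*S + z + 1)) * F = ((P - S + 1)*(z*P - 1))"
proof -
  have c: "(z*(U1*U2)*(z*(U1*U2) - z*(2*z*(U1*U2) + 2*(U1*U2) - z*(U1*U2)*(U1 + U2)) + z + 1)) * (((U1 - 1)^2 * (1 - z*U1))*(z^2*U2^2*(U2 - 1)) - ((U2 - 1)^2 * (1 - z*U2))*(z^2*U1^2*(U1 - 1))) - (((U1*U2) - (2*z*(U1*U2) + 2*(U1*U2) - z*(U1*U2)*(U1 + U2)) + 1)*(z*(U1*U2) - 1)) * ((z*U1*(U1 - 1 + z*U1))*(z^2*U2^2*(U2 - 1)) - (z*U2*(U2 - 1 + z*U2))*(z^2*U1^2*(U1 - 1))) = 0" by (rule cert_all[OF k1 k2 ne z])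
  have c': "(z*P*(z*P - z*S + z + 1)) * (((U1 - 1)^2 * (1 - z*U1))*(z^2*U2^2*(U2 - 1)) - ((U2 - 1)^2 * (1 - z*U2))*(z^2*U1^2*(U1 - 1))) - ((P - S + 1)*(z*P - 1)) * ((z*U1*(U1 - 1 + z*U1))*(z^2*U2^2*(U2 - 1)) - (z*U2*(U2 - 1 + z*U2))*(z^2*U1^2*(U1 - 1))) = 0" using c unfolding hS hP .
  have n0: "(((U1 - 1)^2 * (1 - z*U1))*(z^2*U2^2*(U2 - 1)) - ((U2 - 1)^2 * (1 - z*U2))*(z^2*U1^2*(U1 - 1))) - F * ((z*U1*(U1 - 1 + z*U1))*(z^2*U2^2*(U2 - 1)) - (z*U2*(U2 - 1 + z*U2))*(z^2*U1^2*(U1 - 1))) = (z^2*U2^2*(U2 - 1)) * ((U1 - 1)^2 * (1 - z*U1) - (z*U1*(U1 - 1 + z*U1)*F + z^2*U1^2*(U1 - 1)*D))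
     - (z^2*U1^2*(U1 - 1)) * ((U2 - 1)^2 * (1 - z*U2) - (z*U2*(U2 - 1 + z*U2)*F + z^2*U2^2*(U2 - 1)*D))"
    by algebra
  have n: "(((U1 - 1)^2 * (1 - z*U1))*(z^2*U2^2*(U2 - 1)) - ((U2 - 1)^2 * (1 - z*U2))*(z^2*U1^2*(U1 - 1))) = F * ((z*U1*(U1 - 1 + z*U1))*(z^2*U2^2*(U2 - 1)) - (z*U2*(U2 - 1 + z*U2))*(z^2*U1^2*(U1 - 1)))" using n0 e1 e2 by simp
  have dn: "((z*U1*(U1 - 1 + z*U1))*(z^2*U2^2*(U2 - 1)) - (z*U2*(U2 - 1 + z*U2))*(z^2*U1^2*(U1 - 1))) = z^5*U1*U2*(Y2 - Y1)*(z*Y1*Y2 + U1*U2)"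
    unfolding u1 u2 by algebra
  have "((z*U1*(U1 - 1 + z*U1))*(z^2*U2^2*(U2 - 1)) - (z*U2*(U2 - 1 + z*U2))*(z^2*U1^2*(U1 - 1))) * ((z*P*(z*P - z*S + z + 1)) * F - ((P - S + 1)*(z*P - 1))) = (z*P*(z*P - z*S + z + 1)) * (((U1 - 1)^2 * (1 - z*U1))*(z^2*U2^2*(U2 - 1)) - ((U2 - 1)^2 * (1 - z*U2))*(z^2*U1^2*(U1 - 1))) - ((P - S + 1)*(z*P - 1)) * ((z*U1*(U1 - 1 + z*U1))*(z^2*U2^2*(U2 - 1)) - (z*U2*(U2 - 1 + z*U2))*(z^2*U1^2*(U1 - 1)))"
    unfolding n by (simp add: algebra_simps)
  also have "\<dots> = 0" by (rule c')
  finally have "(z*P*(z*P - z*S + z + 1)) * F - ((P - S + 1)*(z*P - 1)) = 0" using nz dn by simp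
  then show ?thesis by simp
qed

definition Ktp :: "'a::comm_ring_1 \<Rightarrow> 'a \<Rightarrow> 'a" where
  "Ktp z x = z^2*x^4 - z^2*x^3 - 2*z*x^3 + 3*z*x^2 + x^2 - 2*z*x - 2*x + 1"
definition Kmp :: "'a::comm_ring_1 \<Rightarrow> 'a \<Rightarrow> 'a" where
  "Kmp z u = z^2*u^4 - 2*z^2*u^3 - 2*z*u^3 + 3*z*u^2 + u^2 - z*u - 2*u + 1"
definition aa :: "'a::comm_ring_1 \<Rightarrow> 'a \<Rightarrow> 'a \<Rightarrow> 'a" where "aa z S P = (0 - z^3*P^3 - 2*z^2*S^2*P + 3*z^2*S*P^2 - 2*z^2*P^3 + 2*z^2*P^2 + z*S^3 - 2*z*S^2*P + z*S*P^2 - 2*z*S*P + 2*z*P^2)"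
definition bb :: "'a::comm_ring_1 \<Rightarrow> 'a \<Rightarrow> 'a \<Rightarrow> 'a" where "bb z S P = (z^2*P^3 + 2*z*S*P - 3*z*P^2 - S^2 + 2*S*P - P^2 + P)"
definition bet :: "'a::comm_ring_1 \<Rightarrow> 'a \<Rightarrow> 'a \<Rightarrow> 'a" where "bet z S P = P*(-2*z-2) + S"
definition gam :: "'a::comm_ring_1 \<Rightarrow> 'a \<Rightarrow> 'a \<Rightarrow> 'a" where "gam z S P = P^2*(3*z+1) + S*bet z S P - P"

lemma I1: fixes z u S P :: "'a::idom"
  shows "z^2*P^3*Kmp z u = (z^2*P*u^2 - z*S*u + 1)*(z^2*P^2*u^2 + z*P*bet z S P*u + gam z S P) + aa z S P*u + bb z S P"
  unfolding Kmp_def aa_def bb_def bet_def gam_def by algebra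

lemma I2: fixes z X S P :: "'a::idom"
  shows "z^2*P^3*z^2*Ktp z X - z^2*(X^2 - S*X + P)*(z^2*P^2 + z*P*bet z S P*(z*X) + gam z S P*(z*X)^2) = (z*X)^3*(aa z S P + bb z S P*z*X)"
  unfolding Ktp_def aa_def bb_def bet_def gam_def by algebra

lemma gam_b: fixes z S P :: "'a::idom" shows "gam z S P + bb z S P = z^2*P^3"
  unfolding bb_def bet_def gam_def by algebra

lemma bridge:
  fixes z X1 X2 U1 U2 :: "'a::idom"
  assumes x1: "Ktp z X1 = 0" and x2: "Ktp z X2 = 0" and xne: "X1 \<noteq> X2" and z: "z \<noteq> 0"
    and x10: "X1 \<noteq> 0" and x20: "X2 \<noteq> 0"
    and m1: "Kmp z U1 = 0" and m2: "Kmp z U2 = 0" and une: "U1 \<noteq> U2"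
    and q1: "z^2*(X1*X2)*U1^2 - z*(X1+X2)*U1 + 1 \<noteq> 0"
    and q2: "z^2*(X1*X2)*U2^2 - z*(X1+X2)*U2 + 1 \<noteq> 0"
  shows "U1*U2 = X1*X2" "z*(X1*X2)*(U1+U2) = 2*z*(X1*X2) + 2*(X1*X2) - (X1+X2)"
proof -
  define S where "S = X1 + X2"
  define P where "P = X1 * X2"
  have r1: "X1^2 - S*X1 + P = 0" unfolding S_def P_def by (simp add: algebra_simps power2_eq_square)
  have r2: "X2^2 - S*X2 + P = 0" unfolding S_def P_def by (simp add: algebra_simps power2_eq_square)
  have "(z*X1)^3*(aa z S P + bb z S P*z*X1) = 0" using I2[of z P X1 S] x1 r1 by simp
  then have h1: "aa z S P + bb z S P*z*X1 = 0" using z x10 by simp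
  have "(z*X2)^3*(aa z S P + bb z S P*z*X2) = 0" using I2[of z P X2 S] x2 r2 by simp
  then have h2: "aa z S P + bb z S P*z*X2 = 0" using z x20 by simp
  have "bb z S P * z * (X1 - X2) = (aa z S P + bb z S P*z*X1) - (aa z S P + bb z S P*z*X2)"
    by (simp add: algebra_simps)
  also have "\<dots> = 0" using h1 h2 by simp
  finally have "bb z S P * z * (X1 - X2) = 0" .
  then have b0: "bb z S P = 0" using z xne by simp
  then have a0: "aa z S P = 0" using h1 by simp
  have R1: "z^2*P^2*U1^2 + z*P*bet z S P*U1 + gam z S P = 0"
  proof -
    have "(z^2*P*U1^2 - z*S*U1 + 1)*(z^2*P^2*U1^2 + z*P*bet z S P*U1 + gam z S P) = 0"
      using I1[of z P U1 S] m1 a0 b0 by simp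
    then show ?thesis using q1 unfolding S_def P_def by simp
  qed
  have R2: "z^2*P^2*U2^2 + z*P*bet z S P*U2 + gam z S P = 0"
  proof -
    have "(z^2*P*U2^2 - z*S*U2 + 1)*(z^2*P^2*U2^2 + z*P*bet z S P*U2 + gam z S P) = 0"
      using I1[of z P U2 S] m2 a0 b0 by simp
    then show ?thesis using q2 unfolding S_def P_def by simp
  qed
  have "(U1 - U2)*(z*P*(z*P*(U1+U2) + bet z S P)) = (z^2*P^2*U1^2 + z*P*bet z S P*U1 + gam z S P) - (z^2*P^2*U2^2 + z*P*bet z S P*U2 + gam z S P)"
    by (simp add: algebra_simps power2_eq_square)
  also have "\<dots> = 0" using R1 R2 by simp
  finally have "z*P*(z*P*(U1+U2) + bet z S P) = 0" using une by simp
  moreover have "P \<noteq> 0" using x10 x20 unfolding P_def by simp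
  ultimately have sig: "z*P*(U1+U2) + bet z S P = 0" using z by simp
  then show "z*(X1*X2)*(U1+U2) = 2*z*(X1*X2) + 2*(X1*X2) - (X1+X2)"
    unfolding bet_def S_def P_def by (simp add: algebra_simps)
  have g: "gam z S P = z^2*P^3" using gam_b[of z S P] b0 by simp
  have "z^2*P^2*(P - U1*U2) = z^2*P^2*U1^2 + z*P*bet z S P*U1 + gam z S P"
  proof -
    have bsig: "bet z S P = - (z*P*(U1+U2))" using sig by (simp add: eq_neg_iff_add_eq_0 add.commute)
    show ?thesis unfolding g bsig by algebra
  qed
  also have "\<dots> = 0" by (rule R1)
  finally have "P - U1*U2 = 0" using z \<open>P \<noteq> 0\<close> by simp
  then show "U1*U2 = X1*X2" unfolding P_def by simp
qed

lemma nz0: "f $ 0 \<noteq> 0 \<Longrightarrow> f \<noteq> (0::real fps)" by auto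

theorem mainTheorem8:
  shows "\<exists>X1 X2 :: real fps.
     X1 \<noteq> X2 \<and> Kt X1 = 0 \<and> Kt X2 = 0 \<and> fps_nth X1 0 = 1 \<and> fps_nth X2 0 = 1 \<and>
     (\<forall>X :: real fps. Kt X = 0 \<and> fps_nth X 0 = 1 \<longrightarrow> X = X1 \<or> X = X2) \<and>
     fps_nth X1 1 = -1 \<and> fps_nth X2 1 = 1 \<and>
     (let Z = (fps_X ^ 2 :: real fps) in
       fps_to_fls (fps_compose (Abs_fps (\<lambda>n. real (I_count n))) Z) =
         fps_to_fls ((X1 - 1) * (X2 - 1) * (Z * X1 * X2 - 1)) /
         fps_to_fls (X1 * X2 * Z * (X1 * X2 * Z - X1 * Z - X2 * Z + Z + 1)))"
proof -
  obtain X1 X2 :: "real fps" where X: "X1 \<noteq> X2" "Kt X1 = 0" "Kt X2 = 0" "X1 $ 0 = 1" "X2 $ 0 = 1"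
     "\<forall>X :: real fps. Kt X = 0 \<and> fps_nth X 0 = 1 \<longrightarrow> X = X1 \<or> X = X2" "X1 $ 1 = -1" "X2 $ 1 = 1"
    using X_roots by blast
  obtain Y1 Y2 where Y: "Km (1 + fps_X^2 * Y1) = 0" "Km (1 + fps_X^2 * Y2) = 0" "Y1 $ 0 \<noteq> Y2 $ 0"
    using U_roots by blast
  define z where "z = (fps_X^2 :: real fps)"
  define U1 where "U1 = 1 + z * Y1"
  define U2 where "U2 = 1 + z * Y2"
  have z0: "z \<noteq> 0" unfolding z_def by simp
  have zn0: "z $ 0 = 0" unfolding z_def by simp
  have KtP: "Kt X = Ktp z X" for X unfolding Kt_def Ktp_def Let_def z_def ..
  have KmP: "Km U = Kmp z U" for U unfolding Km_def Kmp_def Let_def z_def ..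
  have "Km U1 = 0" using Y(1) unfolding U1_def z_def .
  then have m1: "Kmp z U1 = 0" using KmP by simp
  have "Km U2 = 0" using Y(2) unfolding U2_def z_def .
  then have m2: "Kmp z U2 = 0" using KmP by simp
  have x1: "Ktp z X1 = 0" using X(2) KtP by simp
  have x2: "Ktp z X2 = 0" using X(3) KtP by simp
  have X10: "X1 \<noteq> 0" by (rule nz0) (simp add: X(4))
  have X20: "X2 \<noteq> 0" by (rule nz0) (simp add: X(5))
  have U10: "U1 $ 0 = 1" unfolding U1_def by (simp add: zn0)
  have U20: "U2 $ 0 = 1" unfolding U2_def by (simp add: zn0)
  have une: "U1 \<noteq> U2"
  proof
    assume "U1 = U2"
    then have "z * Y1 = z * Y2" unfolding U1_def U2_def by simp
    then have "Y1 = Y2" using z0 by simp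
    then show False using Y(3) by simp
  qed
  have q1: "z^2*(X1*X2)*U1^2 - z*(X1+X2)*U1 + 1 \<noteq> 0" by (rule nz0) (simp add: zn0 nth0_power)
  have q2: "z^2*(X1*X2)*U2^2 - z*(X1+X2)*U2 + 1 \<noteq> 0" by (rule nz0) (simp add: zn0 nth0_power)
  note br = bridge[OF x1 x2 X(1) z0 X10 X20 m1 m2 une q1 q2]
  have hP: "X1 * X2 = U1 * U2" using br(1) by simp
  have hS: "X1 + X2 = 2*z*(X1*X2) + 2*(X1*X2) - z*(X1*X2)*(U1 + U2)" using br(2) by (simp add: algebra_simps)
  have e1: "(U1 - 1)^2 * (1 - z*U1) = z*U1*(U1 - 1 + z*U1)*FF + z^2*U1^2*(U1 - 1)*DD"
  proof -
    have "Km U1 = 0" using m1 KmP by simp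
    then have "0 = (U1 - 1)^2 * (1 - z*U1) - z * U1 * (U1 - 1 + z * U1) * FF - z^2 * U1^2 * (U1 - 1) * DD"
      using kernel_eq[of U1] unfolding z_def by simp
    then show ?thesis by (simp add: algebra_simps)
  qed
  have e2: "(U2 - 1)^2 * (1 - z*U2) = z*U2*(U2 - 1 + z*U2)*FF + z^2*U2^2*(U2 - 1)*DD"
  proof -
    have "Km U2 = 0" using m2 KmP by simp
    then have "0 = (U2 - 1)^2 * (1 - z*U2) - z * U2 * (U2 - 1 + z * U2) * FF - z^2 * U2^2 * (U2 - 1) * DD"
      using kernel_eq[of U2] unfolding z_def by simp
    then show ?thesis by (simp add: algebra_simps)
  qed
  have nz: "z^5*U1*U2*(Y2 - Y1)*(z*Y1*Y2 + U1*U2) \<noteq> 0"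
  proof -
    have a: "U1 \<noteq> 0" by (rule nz0) (simp add: U10)
    have b: "U2 \<noteq> 0" by (rule nz0) (simp add: U20)
    have c: "Y2 - Y1 \<noteq> 0" by (rule nz0) (use Y(3) in simp)
    have d: "z*Y1*Y2 + U1*U2 \<noteq> 0" by (rule nz0) (simp add: zn0 U10 U20)
    show ?thesis using a b c d z0 by simp
  qed
  have k1: "Kmp z U1 = 0" by (rule m1)
  have k2: "Kmp z U2 = 0" by (rule m2)
  have main: "z*(X1*X2)*(z*(X1*X2) - z*(X1+X2) + z + 1) * FF = ((X1*X2) - (X1+X2) + 1)*(z*(X1*X2) - 1)"
    by (rule main_alg[OF k1[unfolded Kmp_def] k2[unfolded Kmp_def] une z0 hP hS e1 e2 U1_def U2_def nz])
  define N where "N = (X1 - 1) * (X2 - 1) * (z * X1 * X2 - 1)"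
  define D where "D = X1 * X2 * z * (X1 * X2 * z - X1 * z - X2 * z + z + 1)"
  have FD: "FF * D = N" using main unfolding N_def D_def by (simp add: algebra_simps)
  have Dnz: "D \<noteq> 0"
  proof -
    have "X1 * X2 * z - X1 * z - X2 * z + z + 1 \<noteq> 0" by (rule nz0) (simp add: zn0)
    then show ?thesis unfolding D_def using X10 X20 z0 by simp
  qed
  have fl: "fps_to_fls FF = fps_to_fls N / fps_to_fls D"
  proof -
    have "fps_to_fls N = fps_to_fls FF * fps_to_fls D" unfolding FD[symmetric] by (rule fls_times_fps_to_fls)
    moreover have "fps_to_fls D \<noteq> 0" using Dnz by simp
    ultimately show ?thesis by (simp add: eq_divide_eq)
  qed
  have "(let Z = (fps_X ^ 2 :: real fps) in
       fps_to_fls (fps_compose (Abs_fps (\<lambda>n. real (I_count n))) Z) =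
         fps_to_fls ((X1 - 1) * (X2 - 1) * (Z * X1 * X2 - 1)) /
         fps_to_fls (X1 * X2 * Z * (X1 * X2 * Z - X1 * Z - X2 * Z + Z + 1)))"
    unfolding Let_def FF_compose using fl unfolding N_def D_def z_def .
  then show ?thesis using X by blast
qed

end
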